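(* Let $c_i:=c_i(\alpha,\beta,0)\in\mathbb{Q}[\alpha,\beta]$. Then for every integer $n$, $$(n+2)c_{n+2}+(n+1-r)\alpha c_{n+1}+(n+1-2r)\frac{\alpha^2-\beta}{4}c_n=0.$$
   Context: Fix an integer $r\ge1$ and indeterminates $\alpha,\beta,\gamma$. Define polynomials $c_n=c_n(\alpha,\beta,\gamma)\in\mathbb{Q}[\alpha,\beta,\gamma]$ by $c_n=0$ for $n<0$, $c_0=1$, and for every integer $n\ge-3$, $$(n+4)c_{n+4}+(2n+6-r)\alpha c_{n+3}+\left[(n+2-r)\alpha^2+(2n+5-2r)\frac{\alpha^2-\beta}{4}\right]c_{n+2}+\left[(2n+3-3r)\alpha\frac{\alpha^2-\beta}{4}+\frac{\gamma}{2}\right]c_{n+1}+\frac{1}{16}(\alpha^2-\beta)^2(n+1-2r)c_n=0.$$ $c_n(\alpha,\beta,0)$ denotes $c_n$ with $\gamma$ set to $0$. *)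

theory Defs
  imports Main
begin

text \<open>The polynomials c_n in Q[alpha,beta,gamma] are rendered by their values at
  arbitrary elements alpha, beta, gamma of an arbitrary field of characteristic 0
  (this includes Q and fields of rational functions over Q).
  cseq r a b g m is c_m for m a natural number, the recursion being solved for
  c_{n+4} with n = m - 3 (as an integer) where Suc m = n + 4.\<close>

fun cseq :: "int \<Rightarrow> 'a::field_char_0 \<Rightarrow> 'a \<Rightarrow> 'a \<Rightarrow> nat \<Rightarrow> 'a" where
  "cseq r a b g 0 = 1"
| "cseq r a b g (Suc m) =
     (let n = int m - 3;
          c3 = cseq r a b g m;
          c2 = (if m \<ge> 1 then cseq r a b g (m - 1) else 0);
          c1 = (if m \<ge> 2 then cseq r a b g (m - 2) else 0);
          c0 = (if m \<ge> 3 then cseq r a b g (m - 3) else 0);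
          d = (a^2 - b) / 4
      in - ( of_int (2*n + 6 - r) * a * c3
           + (of_int (n + 2 - r) * a^2 + of_int (2*n + 5 - 2*r) * d) * c2
           + (of_int (2*n + 3 - 3*r) * a * d + g / 2) * c1
           + (a^2 - b)^2 / 16 * of_int (n + 1 - 2*r) * c0 ) / of_nat (Suc m))"

definition c :: "int \<Rightarrow> 'a::field_char_0 \<Rightarrow> 'a \<Rightarrow> 'a \<Rightarrow> int \<Rightarrow> 'a" where
  "c r a b g n = (if n < 0 then 0 else cseq r a b g (nat n))"

end

theory Submission
  imports Defs
begin

lemma c_neg: "n < 0 \<Longrightarrow> c r a b g n = 0" by (simp add: c_def del: cseq.simps)

lemma c_rec:
  fixes a b g :: "'a::field_char_0"
  assumes "n \<ge> -3"
  shows "of_int (n+4) * c r a b g (n+4) + of_int (2*n+6-r) * a * c r a b g (n+3)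
    + (of_int (n+2-r) * a^2 + of_int (2*n+5-2*r) * ((a^2-b)/4)) * c r a b g (n+2)
    + (of_int (2*n+3-3*r) * a * ((a^2-b)/4) + g/2) * c r a b g (n+1)
    + (a^2-b)^2/16 * of_int (n+1-2*r) * c r a b g n = 0"
proof -
  define m where "m = nat (n+3)"
  have n: "n = int m - 3" using assms m_def by simp
  have e4: "c r a b g (n+4) = cseq r a b g (Suc m)" using n by (simp add: c_def del: cseq.simps) (metis Suc_as_int add.commute nat_int)
  have e3: "c r a b g (n+3) = cseq r a b g m" using n by (simp add: c_def del: cseq.simps)
  have e2: "c r a b g (n+2) = (if m \<ge> 1 then cseq r a b g (m-1) else 0)"
    using n by (simp add: c_def nat_diff_distrib' del: cseq.simps)
  have e1: "c r a b g (n+1) = (if m \<ge> 2 then cseq r a b g (m-2) else 0)"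
    using n by (simp add: c_def nat_diff_distrib' del: cseq.simps)
  have e0: "c r a b g n = (if m \<ge> 3 then cseq r a b g (m-3) else 0)"
    using n by (simp add: c_def nat_diff_distrib' del: cseq.simps)
  have pos: "(of_nat (Suc m) :: 'a) \<noteq> 0" by (metis of_nat_eq_0_iff nat.distinct(1))
  have s: "of_int (n+4) = (of_nat (Suc m) :: 'a)" using n by simp
  define C3 where "C3 = cseq r a b g m"
  define C2 where "C2 = (if m \<ge> 1 then cseq r a b g (m-1) else 0)"
  define C1 where "C1 = (if m \<ge> 2 then cseq r a b g (m-2) else 0)"
  define C0 where "C0 = (if m \<ge> 3 then cseq r a b g (m-3) else 0)"
  define X where "X = of_int (2*n + 6 - r) * a * C3
           + (of_int (n + 2 - r) * a^2 + of_int (2*n + 5 - 2*r) * ((a^2 - b) / 4)) * C2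
           + (of_int (2*n + 3 - 3*r) * a * ((a^2 - b) / 4) + g / 2) * C1
           + (a^2 - b)^2 / 16 * of_int (n + 1 - 2*r) * C0"
  have cs: "cseq r a b g (Suc m) = - X / of_nat (Suc m)"
    unfolding X_def C3_def C2_def C1_def C0_def n by (simp only: cseq.simps Let_def)
  have z: "of_nat (Suc m) * (- X / of_nat (Suc m)) + X = 0" using pos by simp
  show ?thesis
    unfolding e4 e3 e2 e1 e0 s cs C3_def[symmetric] C2_def[symmetric] C1_def[symmetric] C0_def[symmetric]
    using z unfolding X_def by (simp only: add.assoc)
qed

lemma alg:
  fixes N R a d yA yB yC yD yE :: "'a::field_char_0"
  shows "((N+2+2)*yE + (N+2+1-R)*a*yD + (N+2+1-2*R)*d*yC) + a*((N+1+2)*yD + (N+1+1-R)*a*yC + (N+1+1-2*R)*d*yB) + d*((N+2)*yC+(N+1-R)*a*yB+(N+1-2*R)*d*yA)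
   = (N+4)*yE + (2*N+6-R)*a*yD + ((N+2-R)*a^2 + (2*N+5-2*R)*d)*yC + ((2*N+3-3*R)*a*d + 0/2)*yB + (d*d)*(N+1-2*R)*yA"
  by (simp add: algebra_simps power2_eq_square)

theorem proposition3p4:
  fixes r :: int and \<alpha> \<beta> :: "'a::field_char_0"
  assumes "r \<ge> 1"
  shows "\<forall>n::int.
    of_int (n + 2) * c r \<alpha> \<beta> 0 (n + 2)
    + of_int (n + 1 - r) * \<alpha> * c r \<alpha> \<beta> 0 (n + 1)
    + of_int (n + 1 - 2*r) * ((\<alpha>^2 - \<beta>) / 4) * c r \<alpha> \<beta> 0 n = 0"
proof -
  define d where "d = (\<alpha>^2 - \<beta>) / 4"
  define L where "L n = of_int (n + 2) * c r \<alpha> \<beta> 0 (n + 2)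
    + of_int (n + 1 - r) * \<alpha> * c r \<alpha> \<beta> 0 (n + 1)
    + of_int (n + 1 - 2*r) * d * c r \<alpha> \<beta> 0 n" for n
  have R: "L (n+2) + \<alpha> * L (n+1) + d * L n = 0" if "n \<ge> -3" for n
  proof -
    have "(\<alpha>^2-\<beta>)^2/16 = d*d" by (simp add: d_def power2_eq_square field_simps)
    moreover have idx: "n+2+2 = n+4" "n+2+1 = n+3" "n+1+2 = n+3" "n+1+1 = n+2" by simp_all
    ultimately have "L (n+2) + \<alpha> * L (n+1) + d * L n =
      of_int (n+4) * c r \<alpha> \<beta> 0 (n+4) + of_int (2*n+6-r) * \<alpha> * c r \<alpha> \<beta> 0 (n+3)
    + (of_int (n+2-r) * \<alpha>^2 + of_int (2*n+5-2*r) * ((\<alpha>^2-\<beta>)/4)) * c r \<alpha> \<beta> 0 (n+2)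
    + (of_int (2*n+3-3*r) * \<alpha> * ((\<alpha>^2-\<beta>)/4) + 0/2) * c r \<alpha> \<beta> 0 (n+1)
    + (\<alpha>^2-\<beta>)^2/16 * of_int (n+1-2*r) * c r \<alpha> \<beta> 0 n"
      unfolding L_def d_def[symmetric] idx
      using alg[where N="of_int n" and R="of_int r" and a=\<alpha> and d=d and yA="c r \<alpha> \<beta> 0 n" and yB="c r \<alpha> \<beta> 0 (n+1)" and yC="c r \<alpha> \<beta> 0 (n+2)" and yD="c r \<alpha> \<beta> 0 (n+3)" and yE="c r \<alpha> \<beta> 0 (n+4)"] idx
      by (simp only: of_int_add of_int_diff of_int_mult of_int_numeral of_int_1 add.assoc numeral_plus_numeral numeral_plus_one one_plus_numeral semiring_norm)
    also have "\<dots> = 0" using c_rec[OF that] .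
    finally show ?thesis .
  qed
  have low: "L n = 0" if "n \<le> -2" for n
  proof (cases "n = -2")
    case True thus ?thesis by (simp add: L_def c_neg)
  next
    case False thus ?thesis using that by (simp add: L_def c_neg)
  qed
  have main: "\<forall>n. n \<le> int k - 3 \<longrightarrow> L n = 0" for k
  proof (induction k rule: less_induct)
    case (less k)
    show ?case
    proof (intro allI impI)
      fix n assume nk: "n \<le> int k - 3"
      show "L n = 0"
      proof (cases "n \<le> -2")
        case True thus ?thesis by (rule low)
      next
        case False
        have h: "L n + \<alpha> * L (n-1) + d * L (n-2) = 0" using R[of "n-2"] False by simp
        have "L (n-1) = 0" "L (n-2) = 0"
          using less[of "nat (n+2)"] nk False by auto
        thus ?thesis using h by simp
      qed
    qed
  qed
  have "L n = 0" for n using main[of "nat (n+3)"] by auto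
  thus ?thesis unfolding L_def d_def by simp
qed

end
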